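(* Let $T\subseteq\mathfrak{S}_n$ be invariant under the modified Foata–Strehl action. Then $\Psi'$ restricts to a bijection $T\to T$, and $\operatorname{veh}(\pi)=\operatorname{des}(\Psi'(\pi))$ for all $\pi\in T$.
   Context: Permutations $\pi\in\mathfrak{S}_n$ are words $a_1\cdots a_n$; $\operatorname{des}(\pi)=|\{i\in[n-1]:a_i>a_{i+1}\}|$. Set $a_0=a_{n+1}=n+1$; a letter $a_k$ is a valley if $a_{k-1}>a_k<a_{k+1}$, a peak if $a_{k-1}<a_k>a_{k+1}$, a double ascent if $a_{k-1}<a_k<a_{k+1}$, a double descent if $a_{k-1}>a_k>a_{k+1}$. For $x\in[n]$: if $x$ is a double descent, $\varphi'_x(\pi)$ moves $x$ to between the first pair of consecutive letters $a_i,a_{i+1}$ to the right of $x$ with $a_i<x<a_{i+1}$; if a double ascent, to between the first pair to the left with $a_i>x>a_{i+1}$; if a peak or valley, $\varphi'_x(\pi)=\pi$. The modified Foata–Strehl action is the $\mathbb{Z}_2^n$-action generated by these commuting involutions; $T$ is invariant if $\varphi'_x(T)\subseteq T$ for all $x$. The decreasing binary tree of a word $w$: empty if $w$ empty; otherwise $w=LmR$ with $m$ the greatest letter, root $m$, left subtree the tree of $L$, right subtree the tree of $R$. $r_\pi(x)$ is the number of right edges on the root-to-$x$ path in the tree of $\pi$, $\operatorname{Odd}(\pi)=\{x:r_\pi(x)\text{ odd}\}$, and $\Psi'(\pi)=\prod_{x\in\operatorname{Odd}(\pi)}\varphi'_x(\pi)$. The unordered decreasing tree $T(w;\infty)$ ($\infty$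 a symbol larger than all letters): if $w$ is empty it is a single vertex $\infty$; otherwise write $w=m_1w_1m_2w_2\cdots m_kw_k$ with $m_1,\dots,m_k$ the left-to-right maxima of $w$, and $T(w;\infty)$ has root $\infty$ with subtrees $T(w_i;m_i)$ (defined in the same way with root labeled $m_i$). $\operatorname{veh}(\pi)$ is the number of non-root vertices of even height (root at height $0$) in $T(\pi;\infty)$. *)

theory Defs
  imports Main "HOL-Library.Tree"
begin

text \<open>Permutations of [n] as words a_1 ... a_n (lists, 0-indexed internally).\<close>
definition perms :: "nat \<Rightarrow> nat list set" where
  "perms n = {w. distinct w \<and> set w = {1..n}}"

definition des :: "nat list \<Rightarrow> nat" where
  "des w = card {i. Suc i < length w \<and> w ! i > w ! Suc i}"

text \<open>Neighbours in the extended word a_0 = a_{n+1} = n+1 (n = length w),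
  for the letter at 0-based position k of w.\<close>
definition lnb :: "nat list \<Rightarrow> nat \<Rightarrow> nat" where
  "lnb w k = (if k = 0 then Suc (length w) else w ! (k - 1))"

definition rnb :: "nat list \<Rightarrow> nat \<Rightarrow> nat" where
  "rnb w k = (if Suc k = length w then Suc (length w) else w ! Suc k)"

definition pos :: "nat list \<Rightarrow> nat \<Rightarrow> nat" where
  "pos w x = (LEAST k. k < length w \<and> w ! k = x)"

definition is_ddes :: "nat list \<Rightarrow> nat \<Rightarrow> bool" where
  "is_ddes w x = (x \<in> set w \<and> lnb w (pos w x) > x \<and> x > rnb w (pos w x))"

definition is_dasc :: "nat list \<Rightarrow> nat \<Rightarrow> bool" where
  "is_dasc w x = (x \<in> set w \<and> lnb w (pos w x) < x \<and> x < rnb w (pos w x))"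

definition move_to :: "nat list \<Rightarrow> nat \<Rightarrow> nat \<Rightarrow> nat \<Rightarrow> nat list" where
  "move_to w k j x = (let u = take k w @ drop (Suc k) w in take j u @ [x] @ drop j u)"

definition phi :: "nat \<Rightarrow> nat list \<Rightarrow> nat list" where
  "phi x w =
    (if is_ddes w x then
       (let k = pos w x;
            j = (LEAST j. k < j \<and> j < length w \<and> w ! j < x \<and> x < rnb w j)
        in move_to w k j x)
     else if is_dasc w x then
       (let k = pos w x;
            j = (GREATEST j. j < k \<and> w ! j < x \<and> x < lnb w j)
        in move_to w k j x)
     else w)"

function dbt :: "nat list \<Rightarrow> nat tree" where
  "dbt w = (if w = [] then Leaf else
     Node (dbt (takeWhile (\<lambda>y. y \<noteq> Max (set w)) w))
          (Max (set w))
          (dbt (tl (dropWhile (\<lambda>y. y \<noteq> Max (set w)) w))))"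
  by pat_completeness auto
termination
proof (relation "measure length", goal_cases)
  case 1 show ?case by simp
next
  case (2 w)
  then have "Max (set w) \<in> set w" by simp
  then have "dropWhile (\<lambda>y. y \<noteq> Max (set w)) w \<noteq> []" by (simp add: dropWhile_eq_Nil_conv)
  moreover have "length (takeWhile (\<lambda>y. y \<noteq> Max (set w)) w) + length (dropWhile (\<lambda>y. y \<noteq> Max (set w)) w) = length w"
    by (metis length_append takeWhile_dropWhile_id)
  ultimately show ?case by (cases "dropWhile (\<lambda>y. y \<noteq> Max (set w)) w") auto
next
  case (3 w)
  have "length (dropWhile (\<lambda>y. y \<noteq> Max (set w)) w) \<le> length w" by (rule length_dropWhile_le)
  moreover from 3 have "length w > 0" by simp
  ultimately show ?case by (cases w) auto
qed

fun rdist :: "nat tree \<Rightarrow> nat \<Rightarrow> nat option" where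
  "rdist Leaf x = None"
| "rdist (Node l a r) x =
     (if x = a then Some 0
      else case rdist l x of Some d \<Rightarrow> Some d | None \<Rightarrow> map_option Suc (rdist r x))"

definition Odd_set :: "nat list \<Rightarrow> nat set" where
  "Odd_set w = {x \<in> set w. odd (the (rdist (dbt w) x))}"

text \<open>Psi'(pi) = prod_{x in Odd(pi)} phi'_x(pi); the phi'_x commute, so they are
  applied in increasing order of x.\<close>
definition Psi :: "nat list \<Rightarrow> nat list" where
  "Psi w = foldr phi (sorted_list_of_set (Odd_set w)) w"

text \<open>Height of a letter y in the unordered decreasing tree T(w;\<infinity>) (root at height 0).
  Writing w = m_1 w_1 m_2 w_2 ..., the first block is m_1 = hd w and
  w_1 = the maximal following run of letters smaller than m_1; y in w_1 lies in T(w_1;m_1).\<close>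
function uht :: "nat list \<Rightarrow> nat \<Rightarrow> nat" where
  "uht [] y = 0"
| "uht (m # rest) y =
     (if y = m then 1
      else if y \<in> set (takeWhile (\<lambda>z. z < m) rest)
           then Suc (uht (takeWhile (\<lambda>z. z < m) rest) y)
      else uht (dropWhile (\<lambda>z. z < m) rest) y)"
  by pat_completeness auto
termination
  by (relation "measure (\<lambda>(w, y). length w)")
     (auto simp: le_imp_less_Suc length_takeWhile_le length_dropWhile_le)

definition veh :: "nat list \<Rightarrow> nat" where
  "veh w = card {y \<in> set w. even (uht w y)}"

end

theory Submission
  imports Defs
begin


declare dbt.simps[simp del]

fun dheap :: "nat tree \<Rightarrow> bool" where
  "dheap Leaf = True"
| "dheap (Node l a r) = (dheap l \<and> dheap r \<and> (\<forall>y\<in>set_tree l. y < a) \<and> (\<forall>y\<in>set_tree r. y < a))"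

fun sw :: "nat set \<Rightarrow> nat tree \<Rightarrow> nat tree" where
  "sw S Leaf = Leaf"
| "sw S (Node l a r) = (if a \<in> S \<and> (l = Leaf) \<noteq> (r = Leaf) then Node (sw S r) a (sw S l)
                        else Node (sw S l) a (sw S r))"

fun OddS :: "nat \<Rightarrow> nat tree \<Rightarrow> nat set" where
  "OddS p Leaf = {}"
| "OddS p (Node l a r) = OddS p l \<union> OddS (Suc p) r \<union> (if odd p then {a} else {})"

fun nR :: "nat tree \<Rightarrow> nat" where
  "nR Leaf = 0"
| "nR (Node l a r) = nR l + nR r + (if r = Leaf then 0 else 1)"

fun F :: "nat \<Rightarrow> nat tree \<Rightarrow> nat tree" where
  "F p Leaf = Leaf"
| "F p (Node l a r) = (if odd p \<and> (l = Leaf) \<noteq> (r = Leaf) then Node (F (Suc p) r) a (F p l)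
                        else Node (F p l) a (F (Suc p) r))"

lemma sw_Leaf_iff[simp]: "(sw S t = Leaf) = (t = Leaf)"
  by (cases t) auto

lemma F_Leaf_iff[simp]: "(F p t = Leaf) = (t = Leaf)"
  by (cases t) auto

lemma F_Leaf_iff2[simp]: "(Leaf = F p t) = (t = Leaf)"
  by (cases t) auto

lemma set_sw[simp]: "set_tree (sw S t) = set_tree t"
  by (induction t) auto

lemma size_sw[simp]: "size (sw S t) = size t"
  by (induction t) auto

lemma dheap_sw: "dheap t \<Longrightarrow> dheap (sw S t)"
  by (induction t) auto

lemma distinct_sw: "distinct (inorder t) \<Longrightarrow> distinct (inorder (sw S t))"
  by (induction t) auto

lemma sw_cong: "S \<inter> set_tree t = S' \<inter> set_tree t \<Longrightarrow> sw S t = sw S' t"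
proof (induction t)
  case Leaf then show ?case by simp
next
  case (Node l a r)
  have "S \<inter> set_tree l = S' \<inter> set_tree l" "S \<inter> set_tree r = S' \<inter> set_tree r" "(a \<in> S) = (a \<in> S')"
    using Node.prems by auto
  then show ?case using Node.IH by simp
qed

lemma sw_restrict: "sw S t = sw (S \<inter> set_tree t) t"
  by (rule sw_cong) auto

lemma sw_empty[simp]: "sw {} t = t"
  by (induction t) auto

lemma sw_notin: "x \<notin> set_tree t \<Longrightarrow> sw {x} t = t"
  by (induction t) auto

lemma sw_insert_notin: "x \<notin> set_tree t \<Longrightarrow> sw (insert x S) t = sw S t"
  by (metis Int_insert_left sw_restrict)

lemma OddS_sub: "OddS p t \<subseteq> set_tree t"
  by (induction t arbitrary: p) auto

lemma sw_comp: "distinct (inorder t) \<Longrightarrow> x \<notin> S \<Longrightarrow> sw {x} (sw S t) = sw (insert x S) t"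
proof (induction t)
  case Leaf then show ?case by simp
next
  case (Node l a r)
  show ?case
  proof (cases "x = a")
    case True
    then have "x \<notin> set_tree l" "x \<notin> set_tree r" using Node.prems by auto
    then show ?thesis using True Node.prems
      by (auto simp: sw_notin sw_insert_notin)
  next
    case False
    then show ?thesis using Node by auto
  qed
qed

lemma F_sw: "distinct (inorder t) \<Longrightarrow> F p t = sw (OddS p t) t"
proof (induction t arbitrary: p)
  case Leaf then show ?case by simp
next
  case (Node l a r)
  have d: "distinct (inorder l)" "distinct (inorder r)" "a \<notin> set_tree l" "a \<notin> set_tree r"
    "set_tree l \<inter> set_tree r = {}" using Node.prems by auto
  have "OddS p (Node l a r) \<inter> set_tree l = OddS p l"
    using d OddS_sub[of p l] OddS_sub[of "Suc p" r] by auto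
  then have l: "sw (OddS p (Node l a r)) l = sw (OddS p l) l"
    by (metis sw_restrict)
  have "OddS p (Node l a r) \<inter> set_tree r = OddS (Suc p) r"
    using d OddS_sub[of p l] OddS_sub[of "Suc p" r] by auto
  then have r: "sw (OddS p (Node l a r)) r = sw (OddS (Suc p) r) r"
    by (metis sw_restrict)
  have "(a \<in> OddS p (Node l a r)) = odd p"
    using d OddS_sub[of p l] OddS_sub[of "Suc p" r] by auto
  then show ?case
    by (simp only: F.simps sw.simps l r Node.IH(1)[OF d(1)] Node.IH(2)[OF d(2)])
qed

lemma F_inj: "F p t1 = F p t2 \<Longrightarrow> t1 = t2"
proof (induction t1 arbitrary: p t2)
  case Leaf then show ?case by (metis F_Leaf_iff)
next
  case (Node l a r)
  then obtain l2 a2 r2 where t2: "t2 = Node l2 a2 r2"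
    by (metis F_Leaf_iff tree.exhaust)
  show ?case using Node.prems Node.IH unfolding t2
    by (auto split: if_splits)
qed

lemma nR_F: "nR (F p t) + (if t \<noteq> Leaf \<and> odd p then 1 else 0) = card (OddS p t)"
  if "distinct (inorder t)"
  using that
proof (induction t arbitrary: p)
  case Leaf then show ?case by simp
next
  case (Node l a r)
  have d: "distinct (inorder l)" "distinct (inorder r)" "a \<notin> set_tree l" "a \<notin> set_tree r"
    "set_tree l \<inter> set_tree r = {}" using Node.prems by auto
  have c: "card (OddS p (Node l a r)) = card (OddS p l) + card (OddS (Suc p) r) + (if odd p then 1 else 0)"
  proof -
    have disj: "OddS p l \<inter> OddS (Suc p) r = {}" using d OddS_sub[of p l] OddS_sub[of "Suc p" r] by auto
    have "a \<notin> OddS p l \<union> OddS (Suc p) r" using d OddS_sub[of p l] OddS_sub[of "Suc p" r] by auto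
    then show ?thesis using disj
      by (simp add: card_Un_disjoint finite_subset[OF OddS_sub])
  qed
  have IHl: "nR (F p l) + (if l \<noteq> Leaf \<and> odd p then 1 else 0) = card (OddS p l)" using Node.IH(1) d by blast
  have IHr: "nR (F (Suc p) r) + (if r \<noteq> Leaf \<and> odd (Suc p) then 1 else 0) = card (OddS (Suc p) r)" using Node.IH(2) d by blast
  show ?case using c IHl IHr by (auto split: if_splits)
qed



lemma dbt_Nil[simp]: "dbt [] = Leaf"
  by (subst dbt.simps) simp

lemma dbt_split:
  assumes "distinct (xs @ M # ys)" "\<forall>z\<in>set xs \<union> set ys. z < M"
  shows "dbt (xs @ M # ys) = Node (dbt xs) M (dbt ys)"
proof -
  have mx: "Max (set (xs @ M # ys)) = M"
    using assms(2) by (intro Max_eqI) (auto intro: less_imp_le)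
  have nx: "\<forall>z\<in>set xs. z \<noteq> M" using assms(1) by auto
  have tw: "takeWhile (\<lambda>y. y \<noteq> M) (xs @ M # ys) = xs"
    using nx by (simp add: takeWhile_append2)
  have dw: "dropWhile (\<lambda>y. y \<noteq> M) (xs @ M # ys) = M # ys"
    using nx by (simp add: dropWhile_append2)
  show ?thesis
    by (subst dbt.simps, simp only: mx tw dw, simp)
qed

lemma split_max:
  fixes w :: "nat list"
  assumes "distinct w" "w \<noteq> []"
  obtains xs M ys where "w = xs @ M # ys" "\<forall>z\<in>set xs \<union> set ys. z < M"
proof -
  define M where "M = Max (set w)"
  have "M \<in> set w" using assms unfolding M_def by simp
  then obtain xs ys where w: "w = xs @ M # ys" by (meson split_list)
  have all: "\<forall>z\<in>set w. z \<le> M" unfolding M_def by simp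
  have "\<forall>z\<in>set xs \<union> set ys. z \<le> M" using all unfolding w by simp
  moreover have "\<forall>z\<in>set xs \<union> set ys. z \<noteq> M" using assms(1) unfolding w by auto
  ultimately show ?thesis using that w by force
qed

lemma inorder_dbt: "distinct w \<Longrightarrow> inorder (dbt w) = w \<and> dheap (dbt w)"
proof (induction "length w" arbitrary: w rule: less_induct)
  case less
  show ?case
  proof (cases "w = []")
    case True then show ?thesis by simp
  next
    case False
    obtain xs M ys where w: "w = xs @ M # ys" and lt: "\<forall>z\<in>set xs \<union> set ys. z < M"
      using split_max[OF less.prems False] by blast
    have d: "distinct xs" "distinct ys" using less.prems unfolding w by auto
    have "length xs < length w" "length ys < length w" unfolding w by simp_all
    then have IH: "inorder (dbt xs) = xs \<and> dheap (dbt xs)" "inorder (dbt ys) = ys \<and> dheap (dbt ys)"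
      using less.hyps d by blast+
    have "dbt w = Node (dbt xs) M (dbt ys)"
      unfolding w using less.prems lt unfolding w by (intro dbt_split) auto
    moreover have "set_tree (dbt xs) = set xs" "set_tree (dbt ys) = set ys"
      using IH by (metis set_inorder)+
    ultimately show ?thesis using IH lt unfolding w by simp
  qed
qed

lemma dbt_inorder: "dheap t \<Longrightarrow> distinct (inorder t) \<Longrightarrow> dbt (inorder t) = t"
proof (induction t)
  case Leaf then show ?case by simp
next
  case (Node l a r)
  have "dbt (inorder l @ a # inorder r) = Node (dbt (inorder l)) a (dbt (inorder r))"
    using Node.prems by (intro dbt_split) auto
  then show ?case using Node by auto
qed

lemma set_dbt: "distinct w \<Longrightarrow> set_tree (dbt w) = set w"
  by (metis inorder_dbt set_inorder)

lemma rdist_None: "(rdist t y = None) = (y \<notin> set_tree t)"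
  by (induction t) (auto split: option.splits)

lemma rdist_Some: "rdist t y = Some d \<Longrightarrow> y \<in> set_tree t"
  using rdist_None by force

lemma dbt_app:
  assumes "distinct (A @ B)" "B \<noteq> []" "\<forall>a\<in>set A. a < hd B"
  shows "rdist (dbt (A @ B)) y = (if y \<in> set A then rdist (dbt A) y else rdist (dbt B) y)"
  using assms
proof (induction "length B" arbitrary: B rule: less_induct)
  case less
  have dB: "distinct B" using less.prems by simp
  obtain xs M ys where B: "B = xs @ M # ys" and lt: "\<forall>z\<in>set xs \<union> set ys. z < M"
    using split_max[OF dB less.prems(2)] by blast
  have "hd B \<le> M" using lt B by (cases xs) auto
  then have AM: "\<forall>a\<in>set A. a < M" using less.prems(3) by force
  have dA: "distinct A" using less.prems by simp
  have dys: "distinct ys" "distinct xs" using dB unfolding B by auto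
  have disj: "set A \<inter> set B = {}" using less.prems by simp
  show ?case
  proof (cases "xs = []")
    case True
    have e1: "dbt (A @ B) = Node (dbt A) M (dbt ys)"
      using dbt_split[of A M ys] less.prems(1) AM lt unfolding B True by auto
    have e2: "dbt B = Node Leaf M (dbt ys)"
      using dbt_split[of "[]" M ys] dB lt unfolding B True by auto
    show ?thesis using disj dA dys unfolding e1 e2 unfolding B True
      by (auto simp: rdist_None set_dbt dest: rdist_Some split: option.splits)
  next
    case False
    have e1: "dbt (A @ B) = Node (dbt (A @ xs)) M (dbt ys)"
      using dbt_split[of "A @ xs" M ys] less.prems(1) AM lt unfolding B by auto
    have e2: "dbt B = Node (dbt xs) M (dbt ys)"
      using dbt_split[of xs M ys] dB lt unfolding B by auto
    have len: "length xs < length B" unfolding B by simp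
    have hx: "hd xs = hd B" using False unfolding B by simp
    have d2: "distinct (A @ xs)" using less.prems(1) unfolding B by auto
    have IH: "rdist (dbt (A @ xs)) y = (if y \<in> set A then rdist (dbt A) y else rdist (dbt xs) y)"
      using less.hyps[OF len d2 False] less.prems(3) hx by simp
    have d3: "distinct (A @ xs @ M # ys)" using less.prems(1) unfolding B .
    show ?thesis unfolding e1 e2 using disj dA dys d2 d3 unfolding B
      by (auto simp: IH rdist_None set_dbt dest: rdist_Some split: option.splits)
  qed
qed

lemma uht_rdist: "distinct w \<Longrightarrow> y \<in> set w \<Longrightarrow> rdist (dbt w) y = Some (uht w y - 1) \<and> 0 < uht w y"
proof (induction w y rule: uht.induct)
  case (1 y) then show ?case by simp
next
  case (2 m rest y)
  define w1 where "w1 = takeWhile (\<lambda>z. z < m) rest"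
  define w2 where "w2 = dropWhile (\<lambda>z. z < m) rest"
  have rest: "rest = w1 @ w2" unfolding w1_def w2_def by simp
  have w1lt: "\<forall>z\<in>set w1. z < m" unfolding w1_def by (meson set_takeWhileD)
  have d: "distinct (m # w1 @ w2)" using 2(3) rest by simp
  have dbt1: "dbt (m # w1) = Node Leaf m (dbt w1)"
    using dbt_split[of "[]" m w1] d w1lt by auto
  have dw1: "distinct w1" "distinct w2" using d by auto
  have r1: "rdist (dbt (m # w1)) y = (if y = m then Some 0 else map_option Suc (rdist (dbt w1) y))"
    unfolding dbt1 by simp
  have main: "rdist (dbt (m # rest)) y = (if y \<in> set (m # w1) then rdist (dbt (m # w1)) y else rdist (dbt w2) y)"
  proof (cases "w2 = []")
    case True then show ?thesis using rest d by (simp add: rdist_None set_dbt)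
  next
    case False
    have "\<not> hd w2 < m" unfolding w2_def using False w2_def hd_dropWhile by metis
    moreover have "hd w2 \<noteq> m" using d False hd_in_set[OF False] by auto
    ultimately have "m < hd w2" by simp
    then have "\<forall>a\<in>set (m # w1). a < hd w2" using w1lt by auto
    then show ?thesis using dbt_app[of "m # w1" w2 y] d False rest by simp
  qed
  show ?case
  proof (cases "y = m")
    case True then show ?thesis using main r1 by simp
  next
    case False
    show ?thesis
    proof (cases "y \<in> set w1")
      case True
      have "rdist (dbt w1) y = Some (uht w1 y - 1) \<and> 0 < uht w1 y"
        using 2(1)[OF False] True dw1 unfolding w1_def by blast
      then show ?thesis using main r1 False True unfolding w1_def by simp
    next
      case nt: False
      have yw2: "y \<in> set w2" using 2(4) False nt rest by auto
      have "rdist (dbt w2) y = Some (uht w2 y - 1) \<and> 0 < uht w2 y"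
        using 2(2)[OF False] nt yw2 dw1 unfolding w1_def w2_def by blast
      then show ?thesis using main False nt unfolding w1_def w2_def by simp
    qed
  qed
qed

fun desr :: "nat list \<Rightarrow> nat" where
  "desr (x # y # zs) = (if y < x then 1 else 0) + desr (y # zs)"
| "desr _ = 0"

lemma des_desr: "des w = desr w"
proof (induction w rule: desr.induct)
  case (1 x y zs)
  have "{i. Suc i < length (x # y # zs) \<and> (x # y # zs) ! Suc i < (x # y # zs) ! i}
      = (if y < x then {0} else {}) \<union> Suc ` {i. Suc i < length (y # zs) \<and> (y # zs) ! Suc i < (y # zs) ! i}"
    (is "?L = ?R")
  proof
    show "?L \<subseteq> ?R"
    proof
      fix i assume "i \<in> ?L"
      then show "i \<in> ?R" by (cases i) auto
    qed
  next
    show "?R \<subseteq> ?L" by auto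
  qed
  moreover have "card ?R = (if y < x then 1 else 0) + card {i. Suc i < length (y # zs) \<and> (y # zs) ! Suc i < (y # zs) ! i}"
    by (auto simp: card_image)
  ultimately show ?case using 1 unfolding des_def by simp
next
  case "2_1" then show ?case unfolding des_def by simp
next
  case ("2_2" v) then show ?case unfolding des_def by simp
qed

lemma desr_app: "desr (xs @ ys) = desr xs + desr ys + (if xs \<noteq> [] \<and> ys \<noteq> [] \<and> hd ys < last xs then 1 else 0)"
proof (induction xs rule: desr.induct)
  case (1 x y zs) then show ?case by simp
next
  case "2_1" then show ?case by simp
next
  case ("2_2" v) then show ?case by (cases ys) auto
qed

lemma desr_inorder: "dheap t \<Longrightarrow> desr (inorder t) = nR t"
proof (induction t)
  case Leaf then show ?case by simp
next
  case (Node l a r)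
  have hl: "l \<noteq> Leaf \<Longrightarrow> last (inorder l) \<in> set_tree l"
    by (metis last_in_set eq_inorder_Nil set_inorder)
  have hr: "r \<noteq> Leaf \<Longrightarrow> hd (inorder r) \<in> set_tree r"
    by (metis hd_in_set eq_inorder_Nil set_inorder)
  have "desr (inorder l @ [a] @ inorder r) = desr (inorder l) + desr ([a] @ inorder r)"
    using Node.prems hl by (subst desr_app) force
  also have "desr ([a] @ inorder r) = desr (inorder r) + (if r = Leaf then 0 else 1)"
    using Node.prems hr by (subst desr_app) force
  finally show ?case using Node by simp
qed



lemma phi_word:
  assumes d: "distinct w" and w: "w = p @ L @ x # R @ s"
    and lt: "\<forall>y\<in>set L \<union> set R. y < x" and pl: "p = [] \<or> x < last p"
    and sh: "s = [] \<or> x < hd s" and xb: "x < Suc (length w)"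
  shows "phi x w = p @ (if (L = []) \<noteq> (R = []) then R @ x # L else L @ x # R) @ s"
proof -
  define k where "k = length p + length L"
  have wk: "w ! k = x" unfolding w k_def by (simp add: nth_append)
  have kl: "k < length w" unfolding w k_def by simp
  have pos: "pos w x = k"
    unfolding pos_def
  proof (rule Least_equality)
    show "k < length w \<and> w ! k = x" using wk kl by simp
    fix y assume "y < length w \<and> w ! y = x"
    then have "y = k" using d wk kl nth_eq_iff_index_eq by metis
    then show "k \<le> y" by simp
  qed
  have xin: "x \<in> set w" unfolding w by simp
  have lnbk: "lnb w k = (if L = [] then (if p = [] then Suc (length w) else last p) else last L)"
  proof (cases "L = []")
    case True
    then show ?thesis unfolding lnb_def k_def using w
      by (cases "p = []") (auto simp: nth_append last_conv_nth)
  next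
    case False
    have e: "w = (p @ L) @ x # R @ s" using w by simp
    have "k - 1 < length (p @ L)" unfolding k_def using False by simp
    then have "w ! (k - 1) = (p @ L) ! (length (p @ L) - 1)" using False unfolding e k_def by (simp add: nth_append)
    also have "\<dots> = last (p @ L)" using False by (metis append_is_Nil_conv last_conv_nth)
    also have "\<dots> = last L" using False by simp
    finally have "w ! (k - 1) = last L" .
    then show ?thesis unfolding lnb_def using False k_def by auto
  qed
  have rnbk: "rnb w k = (if R = [] then (if s = [] then Suc (length w) else hd s) else hd R)"
  proof (cases "R = []")
    case True
    then show ?thesis unfolding rnb_def k_def using w
      by (cases "s = []") (auto simp: nth_append hd_conv_nth)
  next
    case False
    then have "w ! Suc k = hd R" unfolding w k_def
      by (auto simp: nth_append hd_conv_nth)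
    moreover have "Suc k \<noteq> length w" using False unfolding w k_def by simp
    ultimately show ?thesis unfolding rnb_def using False by auto
  qed
  have lenw: "length w = k + Suc (length R + length s)" unfolding w k_def by simp
  consider (vv) "L = []" "R = []" | (pk) "L \<noteq> []" "R \<noteq> []" | (dd) "L = []" "R \<noteq> []"
    | (da) "L \<noteq> []" "R = []" by blast
  then show ?thesis
  proof cases
    case vv
    have "\<not> is_ddes w x" "\<not> is_dasc w x"
      unfolding is_ddes_def is_dasc_def pos lnbk rnbk using vv pl sh xb by auto
    then show ?thesis unfolding phi_def using vv w by simp
  next
    case pk
    have "last L \<in> set L" "hd R \<in> set R" using pk by auto
    then have "last L < x" "hd R < x" using lt by auto
    then have "\<not> is_ddes w x" "\<not> is_dasc w x"
      unfolding is_ddes_def is_dasc_def pos lnbk rnbk using pk by auto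
    then show ?thesis unfolding phi_def using pk w by simp
  next
    case dd
    have "hd R \<in> set R" using dd by auto
    then have "hd R < x" using lt by auto
    then have isd: "is_ddes w x"
      unfolding is_ddes_def pos lnbk rnbk using dd lt pl xin xb by auto
    have hR: "\<forall>i<length R. w ! (Suc k + i) = R ! i" unfolding w k_def using dd by (simp add: nth_append)
    have hs: "\<forall>i<length s. w ! (Suc k + length R + i) = s ! i" unfolding w k_def using dd by (simp add: nth_append)
    define j where "j = k + length R"
    have jeq: "(LEAST j. k < j \<and> j < length w \<and> w ! j < x \<and> x < rnb w j) = j"
    proof (rule Least_equality)
      have jj: "Suc k + (length R - 1) = j" using dd unfolding j_def by simp
      have "w ! j = last R" using hR[rule_format, of "length R - 1"] dd unfolding jj
        by (simp add: last_conv_nth)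
      moreover have "last R \<in> set R" using dd by simp
      moreover have "x < rnb w j"
      proof (cases "s = []")
        case True then show ?thesis unfolding rnb_def j_def using lenw xb by simp
      next
        case False
        then have "w ! Suc j = hd s" using hs[rule_format, of 0] unfolding j_def by (simp add: hd_conv_nth)
        then show ?thesis using False sh lenw unfolding rnb_def j_def by simp
      qed
      ultimately show "k < j \<and> j < length w \<and> w ! j < x \<and> x < rnb w j"
        using dd lt lenw unfolding j_def by auto
    next
      fix y assume P: "k < y \<and> y < length w \<and> w ! y < x \<and> x < rnb w y"
      show "j \<le> y"
      proof (rule ccontr)
        assume "\<not> j \<le> y"
        define i where "i = y - Suc k"
        have y: "y = Suc k + i" and il: "Suc i < length R"
          using P \<open>\<not> j \<le> y\<close> unfolding i_def j_def by linarith+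
        have "rnb w y = R ! Suc i" using hR[rule_format, OF il] lenw il unfolding rnb_def y by simp
        then have "rnb w y < x" using lt il by (simp add: nth_mem)
        then show False using P by simp
      qed
    qed
    have "phi x w = move_to w k j x" unfolding phi_def Let_def pos jeq using isd by simp
    also have "\<dots> = p @ R @ x # s" unfolding move_to_def Let_def w j_def k_def using dd by simp
    finally show ?thesis using dd by simp
  next
    case da
    have "last L \<in> set L" using da by auto
    then have "last L < x" using lt by auto
    then have nd: "\<not> is_ddes w x"
      unfolding is_ddes_def pos lnbk rnbk using da lt sh xb by auto
    have hd0: "hd L \<in> set L" using da by auto
    have "last L \<in> set L" using da by auto
    then have "last L < x" using lt by auto
    then have isa: "is_dasc w x"
      unfolding is_dasc_def pos lnbk rnbk using da lt sh xin xb by auto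
    have hL: "\<forall>i<length L. w ! (length p + i) = L ! i" unfolding w by (simp add: nth_append)
    have jeq: "(GREATEST j. j < k \<and> w ! j < x \<and> x < lnb w j) = length p"
    proof (rule Greatest_equality)
      have "w ! length p = hd L" using hL[rule_format, of 0] da by (simp add: hd_conv_nth)
      moreover have "x < lnb w (length p)"
      proof (cases "p = []")
        case True then show ?thesis unfolding lnb_def using xb by simp
      next
        case False
        then have "w ! (length p - 1) = last p" unfolding w by (simp add: nth_append last_conv_nth)
        then show ?thesis using False pl unfolding lnb_def by simp
      qed
      ultimately show "length p < k \<and> w ! length p < x \<and> x < lnb w (length p)"
        using da lt hd0 unfolding k_def by auto
    next
      fix y assume P: "y < k \<and> w ! y < x \<and> x < lnb w y"
      show "y \<le> length p"
      proof (rule ccontr)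
        assume "\<not> y \<le> length p"
        define i where "i = y - Suc (length p)"
        have y: "y = Suc (length p + i)" and il: "Suc i < length L"
          using P \<open>\<not> y \<le> length p\<close> unfolding i_def k_def by linarith+
        have "lnb w y = L ! i" using hL[rule_format, of i] il unfolding lnb_def y by simp
        then have "lnb w y < x" using lt il by (simp add: nth_mem)
        then show False using P by simp
      qed
    qed
    have "phi x w = move_to w k (length p) x" unfolding phi_def Let_def pos jeq using isa nd by simp
    also have "\<dots> = p @ x # L @ s" unfolding move_to_def Let_def w k_def using da by simp
    finally show ?thesis using da by simp
  qed
qed

lemma tree_decomp:
  "dheap t \<Longrightarrow> distinct (inorder t) \<Longrightarrow> x \<in> set_tree t \<Longrightarrow>
   \<exists>p L R s. inorder t = p @ L @ x # R @ s \<and>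
     inorder (sw {x} t) = p @ (if (L = []) \<noteq> (R = []) then R @ x # L else L @ x # R) @ s \<and>
     (\<forall>y\<in>set L \<union> set R. y < x) \<and> (p = [] \<or> x < last p) \<and> (s = [] \<or> x < hd s)"
proof (induction t)
  case Leaf then show ?case by simp
next
  case (Node l a r)
  have d: "distinct (inorder l)" "distinct (inorder r)" "a \<notin> set_tree l" "a \<notin> set_tree r"
    "set_tree l \<inter> set_tree r = {}" using Node.prems by auto
  have h: "dheap l" "dheap r" "\<forall>y\<in>set_tree l. y < a" "\<forall>y\<in>set_tree r. y < a" using Node.prems by auto
  consider (root) "x = a" | (left) "x \<in> set_tree l" | (right) "x \<in> set_tree r" using Node.prems by auto
  then show ?case
  proof cases
    case root
    have "sw {x} l = l" "sw {x} r = r" using d root by (auto simp: sw_notin)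
    then show ?thesis using root h
      by (intro exI[of _ "[]"] exI[of _ "inorder l"] exI[of _ "inorder r"]) auto
  next
    case left
    obtain p L R s where IH: "inorder l = p @ L @ x # R @ s"
      "inorder (sw {x} l) = p @ (if (L = []) \<noteq> (R = []) then R @ x # L else L @ x # R) @ s"
      "\<forall>y\<in>set L \<union> set R. y < x" "p = [] \<or> x < last p" "s = [] \<or> x < hd s"
      using Node.IH(1)[OF h(1) d(1) left] by blast
    have "x \<noteq> a" "x \<notin> set_tree r" using left d by auto
    then have sw: "sw {x} (Node l a r) = Node (sw {x} l) a r" by (simp add: sw_notin)
    have xa: "x < a" using left h by auto
    show ?thesis
      apply (rule exI[of _ p], rule exI[of _ L], rule exI[of _ R], rule exI[of _ "s @ a # inorder r"])
      using IH xa unfolding sw by (cases s) auto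
  next
    case right
    obtain p L R s where IH: "inorder r = p @ L @ x # R @ s"
      "inorder (sw {x} r) = p @ (if (L = []) \<noteq> (R = []) then R @ x # L else L @ x # R) @ s"
      "\<forall>y\<in>set L \<union> set R. y < x" "p = [] \<or> x < last p" "s = [] \<or> x < hd s"
      using Node.IH(2)[OF h(2) d(2) right] by blast
    have "x \<noteq> a" "x \<notin> set_tree l" using right d by auto
    then have sw: "sw {x} (Node l a r) = Node l a (sw {x} r)" by (simp add: sw_notin)
    have xa: "x < a" using right h by auto
    show ?thesis
      apply (rule exI[of _ "inorder l @ a # p"], rule exI[of _ L], rule exI[of _ R], rule exI[of _ s])
      using IH xa unfolding sw by (cases p rule: rev_cases) auto
  qed
qed

lemma phi_tree:
  assumes "dheap t" "distinct (inorder t)" "x \<in> set_tree t" "x < Suc (size t)"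
  shows "phi x (inorder t) = inorder (sw {x} t)"
proof -
  obtain p L R s where D: "inorder t = p @ L @ x # R @ s"
      "inorder (sw {x} t) = p @ (if (L = []) \<noteq> (R = []) then R @ x # L else L @ x # R) @ s"
      "\<forall>y\<in>set L \<union> set R. y < x" "p = [] \<or> x < last p" "s = [] \<or> x < hd s"
    using tree_decomp[OF assms(1-3)] by blast
  show ?thesis unfolding D(2)
    by (rule phi_word[OF assms(2) D(1) D(3-5)]) (use assms(4) in simp)
qed

lemma foldr_phi:
  assumes "dheap t" "distinct (inorder t)" "\<forall>y\<in>set_tree t. y < Suc (size t)"
  shows "distinct xs \<Longrightarrow> set xs \<subseteq> set_tree t \<Longrightarrow> foldr phi xs (inorder t) = inorder (sw (set xs) t)"
proof (induction xs)
  case Nil then show ?case by simp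
next
  case (Cons x xs)
  define t' where "t' = sw (set xs) t"
  have h: "dheap t'" "distinct (inorder t')" "x \<in> set_tree t'" "x < Suc (size t')"
    unfolding t'_def using assms Cons.prems by (auto simp: dheap_sw distinct_sw)
  have "foldr phi (x # xs) (inorder t) = phi x (inorder t')"
    using Cons unfolding t'_def by simp
  also have "\<dots> = inorder (sw {x} t')" by (rule phi_tree[OF h])
  also have "\<dots> = inorder (sw (set (x # xs)) t)"
    unfolding t'_def using Cons.prems assms(2) by (simp add: sw_comp)
  finally show ?case .
qed

lemma OddS_char: "distinct (inorder t) \<Longrightarrow> OddS p t = {x \<in> set_tree t. odd (the (rdist t x) + p)}"
proof (induction t arbitrary: p)
  case Leaf then show ?case by simp
next
  case (Node l a r)
  have d: "distinct (inorder l)" "distinct (inorder r)" "a \<notin> set_tree l" "a \<notin> set_tree r"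
    "set_tree l \<inter> set_tree r = {}" using Node.prems by auto
  have IHl: "OddS p l = {x \<in> set_tree l. odd (the (rdist l x) + p)}" using Node.IH(1)[OF d(1)] .
  have IHr: "OddS (Suc p) r = {x \<in> set_tree r. odd (the (rdist r x) + Suc p)}" using Node.IH(2)[OF d(2)] .
  have rl: "x \<in> set_tree l \<Longrightarrow> \<exists>dd. rdist l x = Some dd" for x using rdist_None[of l x] by auto
  have rr: "x \<in> set_tree r \<Longrightarrow> \<exists>dd. rdist r x = Some dd" for x using rdist_None[of r x] by auto
  have rl2: "x \<notin> set_tree l \<Longrightarrow> rdist l x = None" for x using rdist_None[of l x] by auto
  show ?case
  proof (rule set_eqI)
    fix x
    show "x \<in> OddS p (Node l a r) \<longleftrightarrow> x \<in> {x \<in> set_tree (Node l a r). odd (the (rdist (Node l a r) x) + p)}"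
    proof (cases "x = a")
      case True then show ?thesis using d IHl IHr by auto
    next
      case False
      show ?thesis
      proof (cases "x \<in> set_tree l")
        case True
        then obtain dd where "rdist l x = Some dd" using rl by blast
        then show ?thesis using True False d IHl IHr by auto
      next
        case nl: False
        show ?thesis
        proof (cases "x \<in> set_tree r")
          case True
          then obtain dd where "rdist r x = Some dd" using rr by blast
          then show ?thesis using True False nl rl2[OF nl] IHl IHr by auto
        next
          case False
          then show ?thesis using nl \<open>x \<noteq> a\<close> IHl IHr by auto
        qed
      qed
    qed
  qed
qed



lemma perm_facts:
  assumes "w \<in> perms n"
  shows "distinct w" "set w = {1..n}" "length w = n"
proof -
  show d: "distinct w" "set w = {1..n}" using assms unfolding perms_def by auto
  show "length w = n" using distinct_card[OF d(1)] d(2) by simp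
qed

lemma Psi_tree:
  assumes "w \<in> perms n"
  shows "Psi w = inorder (F 0 (dbt w))"
proof -
  note pf = perm_facts[OF assms]
  define t where "t = dbt w"
  have it: "inorder t = w" "dheap t" using inorder_dbt[OF pf(1)] unfolding t_def by auto
  have dt: "distinct (inorder t)" using it pf by simp
  have st: "set_tree t = set w" using set_inorder[of t] it(1) by simp
  have sz: "size t = n" using length_inorder[of t] it(1) pf(3) by simp
  have "Odd_set w = {x \<in> set_tree t. odd (the (rdist t x) + 0)}"
    unfolding Odd_set_def st unfolding t_def by simp
  then have odd: "Odd_set w = OddS 0 t" using OddS_char[OF dt] by simp
  have fin: "finite (OddS 0 t)" by (rule finite_subset[OF OddS_sub]) simp
  have bound: "\<forall>y\<in>set_tree t. y < Suc (size t)" using st pf sz by auto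
  have "Psi w = foldr phi (sorted_list_of_set (OddS 0 t)) (inorder t)"
    unfolding Psi_def odd it(1) ..
  also have "\<dots> = inorder (sw (OddS 0 t) t)"
    using foldr_phi[OF it(2) dt bound, of "sorted_list_of_set (OddS 0 t)"] fin OddS_sub[of 0 t]
    by simp
  also have "\<dots> = inorder (F 0 t)" using F_sw[OF dt] by simp
  finally show ?thesis unfolding t_def .
qed

lemma F_props: "dheap t \<Longrightarrow> distinct (inorder t) \<Longrightarrow> dheap (F p t) \<and> distinct (inorder (F p t))"
  by (simp add: F_sw dheap_sw distinct_sw)

lemma Psi_inj: "inj_on Psi (perms n)"
proof (rule inj_onI)
  fix w1 w2 assume w1: "w1 \<in> perms n" and w2: "w2 \<in> perms n" and eq: "Psi w1 = Psi w2"
  note p1 = perm_facts[OF w1] and p2 = perm_facts[OF w2]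
  have i1: "inorder (dbt w1) = w1" "dheap (dbt w1)" using inorder_dbt[OF p1(1)] by auto
  have i2: "inorder (dbt w2) = w2" "dheap (dbt w2)" using inorder_dbt[OF p2(1)] by auto
  have f1: "dheap (F 0 (dbt w1))" "distinct (inorder (F 0 (dbt w1)))"
    using F_props[of "dbt w1" 0] i1 p1(1) by auto
  have f2: "dheap (F 0 (dbt w2))" "distinct (inorder (F 0 (dbt w2)))"
    using F_props[of "dbt w2" 0] i2 p2(1) by auto
  have "inorder (F 0 (dbt w1)) = inorder (F 0 (dbt w2))"
    using eq unfolding Psi_tree[OF w1] Psi_tree[OF w2] .
  then have "dbt (inorder (F 0 (dbt w1))) = dbt (inorder (F 0 (dbt w2)))" by (rule arg_cong)
  then have "F 0 (dbt w1) = F 0 (dbt w2)"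
    unfolding dbt_inorder[OF f1] dbt_inorder[OF f2] .
  then have "dbt w1 = dbt w2" by (rule F_inj)
  then have "inorder (dbt w1) = inorder (dbt w2)" by (rule arg_cong)
  then show "w1 = w2" unfolding i1(1) i2(1) .
qed

lemma veh_Psi:
  assumes "w \<in> perms n"
  shows "veh w = des (Psi w)"
proof -
  note pf = perm_facts[OF assms]
  define t where "t = dbt w"
  have it: "inorder t = w" "dheap t" using inorder_dbt[OF pf(1)] unfolding t_def by auto
  have dt: "distinct (inorder t)" using it pf by simp
  have st: "set_tree t = set w" using set_inorder[of t] it(1) by simp
  have "{y \<in> set w. even (uht w y)} = {x \<in> set_tree t. odd (the (rdist t x) + 0)}"
  proof (rule set_eqI)
    fix y
    show "y \<in> {y \<in> set w. even (uht w y)} \<longleftrightarrow> y \<in> {x \<in> set_tree t. odd (the (rdist t x) + 0)}"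
    proof (cases "y \<in> set w")
      case True
      have "rdist t y = Some (uht w y - 1) \<and> 0 < uht w y" using uht_rdist[OF pf(1) True] unfolding t_def .
      then show ?thesis using True st by (cases "uht w y") auto
    next
      case False then show ?thesis using st by simp
    qed
  qed
  then have "veh w = card (OddS 0 t)" unfolding veh_def OddS_char[OF dt] by simp
  also have "\<dots> = nR (F 0 t)" using nR_F[OF dt, of 0] by simp
  also have "\<dots> = desr (inorder (F 0 t))" using desr_inorder F_props[OF it(2) dt] by simp
  also have "\<dots> = des (Psi w)" using Psi_tree[OF assms] des_desr unfolding t_def by simp
  finally show ?thesis .
qed

lemma foldr_closed:
  assumes "\<forall>x\<in>{1..n}. phi x ` T \<subseteq> T" "w \<in> T"
  shows "set xs \<subseteq> {1..n} \<Longrightarrow> foldr phi xs w \<in> T"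
proof (induction xs)
  case Nil then show ?case using assms(2) by simp
next
  case (Cons x xs)
  then have "x \<in> {1..n}" "foldr phi xs w \<in> T" by auto
  then have "phi x (foldr phi xs w) \<in> T" using assms(1) by blast
  then show ?case by simp
qed

lemma finite_perms: "finite (perms n)"
proof -
  have "perms n \<subseteq> {xs. set xs \<subseteq> {1..n} \<and> length xs = n}"
  proof
    fix xs assume "xs \<in> perms n"
    then show "xs \<in> {xs. set xs \<subseteq> {1..n} \<and> length xs = n}" using perm_facts[of xs n] by simp
  qed
  then show ?thesis by (rule finite_subset) (rule finite_lists_length_eq, simp)
qed

theorem theorem7p2:
  fixes n :: nat and T :: "nat list set"
  assumes "T \<subseteq> perms n"
    and "\<forall>x\<in>{1..n}. phi x ` T \<subseteq> T"
  shows "bij_betw Psi T T \<and> (\<forall>\<pi>\<in>T. veh \<pi> = des (Psi \<pi>))"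
proof
  have inj: "inj_on Psi T" by (rule inj_on_subset[OF Psi_inj assms(1)])
  have sub: "Psi ` T \<subseteq> T"
  proof
    fix v assume "v \<in> Psi ` T"
    then obtain w where w: "w \<in> T" "v = Psi w" by blast
    have wp: "w \<in> perms n" using w assms(1) by blast
    have fin: "finite (Odd_set w)" unfolding Odd_set_def by simp
    have "Odd_set w \<subseteq> {1..n}" using perm_facts(2)[OF wp] unfolding Odd_set_def by auto
    then have "set (sorted_list_of_set (Odd_set w)) \<subseteq> {1..n}" using fin by simp
    then have "foldr phi (sorted_list_of_set (Odd_set w)) w \<in> T" by (rule foldr_closed[OF assms(2) w(1)])
    then show "v \<in> T" unfolding w(2) Psi_def .
  qed
  have finT: "finite T" by (rule finite_subset[OF assms(1) finite_perms])
  have "card (Psi ` T) = card T" using card_image[OF inj] .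
  then have "Psi ` T = T" by (rule card_subset_eq[OF finT sub])
  then show "bij_betw Psi T T" using inj unfolding bij_betw_def by blast
next
  show "\<forall>\<pi>\<in>T. veh \<pi> = des (Psi \<pi>)"
  proof
    fix w assume "w \<in> T"
    then have "w \<in> perms n" using assms(1) by (rule subsetD[rotated])
    then show "veh w = des (Psi w)" by (rule veh_Psi)
  qed
qed

end
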